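(* Let $d\in\mathbb N$ and let $(G_n)$ be a sequence of finite graphs with maximum degree at most $d$ and $\lim_{n\to\infty}|G_n|=\infty$. Then the following are equivalent: (1) $(G_n)$ is BS-convergent; (2) $(G_n)$ is $\mathrm{FO}^{\mathrm{local}}_1$-convergent; (3) $(G_n)$ is $\mathrm{FO}^{\mathrm{local}}$-convergent.
   Context: For a first-order graph formula $\phi$ with free variables among $x_1,\dots,x_p$ and a finite graph $G$, $\langle\phi,G\rangle=|\{(v_1,\dots,v_p)\in V(G)^p:G\models\phi(v_1,\dots,v_p)\}|/|G|^p$; for a set $X$ of formulas, $(G_n)$ is $X$-convergent if $\langle\phi,G_n\rangle$ converges for all $\phi\in X$. A formula $\phi$ with free variables among $x_1,\dots,x_p$ is $r$-local if for every graph $G$ and $v_1,\dots,v_p\in V(G)$, $G\models\phi(v_1,\dots,v_p)$ iff $G[N_r(v_1,\dots,v_p)]\models\phi(v_1,\dots,v_p)$, where $G[N_r(v_1,\dots,v_p)]$ is the subgraph induced by the vertices at distance at most $r$ from some $v_i$; $\phi$ is local if it is $r$-local for some $r$. $\mathrm{FO}^{\mathrm{local}}$ is the set of local formulas and $\mathrm{FO}^{\mathrm{local}}_p$ the set of local formulas with free variables among $x_1,\dots,x_p$. $(G_n)$ is BS-convergent if for every integer $r$ and every finite rooted connected graph $(F,o)$ with maximum degree at most $d$ the limit $\lim_{n\to\infty}|\{v: (B_{G_n}(v,r),v)\cong(F,o)\}|/|G_n|$ exists, where $B_G(v,r)$ is the subgraph induced by vertices at distance at most $r$ from $v$ and $\cong$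 is isomorphism of rooted graphs. *)

theory Defs
  imports Complex_Main "HOL-Library.FuncSet"
begin

record graph =
  verts :: "nat set"
  adj :: "nat \<Rightarrow> nat \<Rightarrow> bool"

definition is_graph :: "graph \<Rightarrow> bool" where
  "is_graph G \<longleftrightarrow> finite (verts G)
     \<and> (\<forall>x y. adj G x y \<longrightarrow> x \<in> verts G \<and> y \<in> verts G)
     \<and> (\<forall>x y. adj G x y \<longrightarrow> adj G y x)
     \<and> (\<forall>x. \<not> adj G x x)"

definition max_degree_le :: "nat \<Rightarrow> graph \<Rightarrow> bool" where
  "max_degree_le d G \<longleftrightarrow> (\<forall>v \<in> verts G. card {u \<in> verts G. adj G v u} \<le> d)"

definition induced :: "graph \<Rightarrow> nat set \<Rightarrow> graph" where
  "induced G S = \<lparr> verts = verts G \<inter> S,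
                   adj = (\<lambda>x y. adj G x y \<and> x \<in> S \<and> y \<in> S) \<rparr>"

fun ball :: "graph \<Rightarrow> nat \<Rightarrow> nat \<Rightarrow> nat set" where
  "ball G 0 x = {x} \<inter> verts G"
| "ball G (Suc k) x = ball G k x \<union> {y \<in> verts G. \<exists>z \<in> ball G k x. adj G z y}"

text \<open>N_r(v_1,...,v_p) for a tuple given as an assignment on indices 0..p-1.\<close>
definition nbhd :: "graph \<Rightarrow> nat \<Rightarrow> nat \<Rightarrow> (nat \<Rightarrow> nat) \<Rightarrow> nat set" where
  "nbhd G r p v = (\<Union>i<p. ball G r (v i))"

definition connected_graph :: "graph \<Rightarrow> bool" where
  "connected_graph G \<longleftrightarrow> (\<forall>x \<in> verts G. \<forall>y \<in> verts G. \<exists>k. y \<in> ball G k x)"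

definition rooted_iso :: "graph \<Rightarrow> nat \<Rightarrow> graph \<Rightarrow> nat \<Rightarrow> bool" where
  "rooted_iso G o1 H o2 \<longleftrightarrow> (\<exists>f. bij_betw f (verts G) (verts H) \<and> f o1 = o2
      \<and> (\<forall>x \<in> verts G. \<forall>y \<in> verts G. adj H (f x) (f y) \<longleftrightarrow> adj G x y))"

datatype fo =
    FEq nat nat
  | FAdj nat nat
  | FNot fo
  | FAnd fo fo
  | FOr fo fo
  | FEx nat fo

fun free_vars :: "fo \<Rightarrow> nat set" where
  "free_vars (FEq x y) = {x, y}"
| "free_vars (FAdj x y) = {x, y}"
| "free_vars (FNot \<phi>) = free_vars \<phi>"
| "free_vars (FAnd \<phi> \<psi>) = free_vars \<phi> \<union> free_vars \<psi>"
| "free_vars (FOr \<phi> \<psi>) = free_vars \<phi> \<union> free_vars \<psi>"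
| "free_vars (FEx x \<phi>) = free_vars \<phi> - {x}"

fun sat :: "graph \<Rightarrow> (nat \<Rightarrow> nat) \<Rightarrow> fo \<Rightarrow> bool" where
  "sat G \<sigma> (FEq x y) \<longleftrightarrow> \<sigma> x = \<sigma> y"
| "sat G \<sigma> (FAdj x y) \<longleftrightarrow> adj G (\<sigma> x) (\<sigma> y)"
| "sat G \<sigma> (FNot \<phi>) \<longleftrightarrow> \<not> sat G \<sigma> \<phi>"
| "sat G \<sigma> (FAnd \<phi> \<psi>) \<longleftrightarrow> sat G \<sigma> \<phi> \<and> sat G \<sigma> \<psi>"
| "sat G \<sigma> (FOr \<phi> \<psi>) \<longleftrightarrow> sat G \<sigma> \<phi> \<or> sat G \<sigma> \<psi>"
| "sat G \<sigma> (FEx x \<phi>) \<longleftrightarrow> (\<exists>v \<in> verts G. sat G (\<sigma>(x := v)) \<phi>)"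

text \<open>Free variables x_1..x_p are represented by indices 0..p-1.\<close>
definition density :: "nat \<Rightarrow> fo \<Rightarrow> graph \<Rightarrow> real" where
  "density p \<phi> G =
     real (card {v \<in> {0..<p} \<rightarrow>\<^sub>E verts G. sat G v \<phi>}) / real (card (verts G)) ^ p"

definition r_local :: "nat \<Rightarrow> nat \<Rightarrow> fo \<Rightarrow> bool" where
  "r_local p r \<phi> \<longleftrightarrow> (\<forall>G v. is_graph G \<longrightarrow> v \<in> {0..<p} \<rightarrow>\<^sub>E verts G \<longrightarrow>
      (sat G v \<phi> \<longleftrightarrow> sat (induced G (nbhd G r p v)) v \<phi>))"

definition FO_local_p :: "nat \<Rightarrow> fo set" where
  "FO_local_p p = {\<phi>. free_vars \<phi> \<subseteq> {0..<p} \<and> (\<exists>r. r_local p r \<phi>)}"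

definition FO_local1_convergent :: "(nat \<Rightarrow> graph) \<Rightarrow> bool" where
  "FO_local1_convergent Gs \<longleftrightarrow> (\<forall>\<phi> \<in> FO_local_p 1. convergent (\<lambda>n. density 1 \<phi> (Gs n)))"

text \<open>FO^local is the union over p of FO^local_p; each formula is evaluated with a p
  witnessing that its free variables are among x_1..x_p.\<close>
definition FO_local_convergent :: "(nat \<Rightarrow> graph) \<Rightarrow> bool" where
  "FO_local_convergent Gs \<longleftrightarrow>
     (\<forall>p. \<forall>\<phi> \<in> FO_local_p p. convergent (\<lambda>n. density p \<phi> (Gs n)))"

definition BS_convergent :: "nat \<Rightarrow> (nat \<Rightarrow> graph) \<Rightarrow> bool" where
  "BS_convergent d Gs \<longleftrightarrow>
     (\<forall>r F o'. is_graph F \<and> o' \<in> verts F \<and> connected_graph F \<and> max_degree_le d F \<longrightarrow>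
        convergent (\<lambda>n. real (card {v \<in> verts (Gs n).
                rooted_iso (induced (Gs n) (ball (Gs n) r v)) v F o'})
              / real (card (verts (Gs n)))))"

end

theory Submission
  imports Defs
begin


lemma ball_subset_verts: "ball G k x \<subseteq> verts G"
  by (induction k) auto

lemma ball_mono_Suc: "ball G k x \<subseteq> ball G (Suc k) x" by auto

lemma ball_mono: "k \<le> l \<Longrightarrow> ball G k x \<subseteq> ball G l x"
  by (induction l) (auto simp: le_Suc_eq)

lemma center_in_ball: "x \<in> verts G \<Longrightarrow> x \<in> ball G k x"
  using ball_mono[of 0 k G x] by auto

lemma ball_add: "z \<in> ball G (m + k) y \<longleftrightarrow> (\<exists>w \<in> ball G m y. z \<in> ball G k w)"
proof (induction k arbitrary: z)
  case 0
  then show ?case using ball_subset_verts by auto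
next
  case (Suc k)
  show ?case
  proof
    assume "z \<in> ball G (m + Suc k) y"
    then have "z \<in> ball G (m+k) y \<or> (z \<in> verts G \<and> (\<exists>u\<in>ball G (m+k) y. adj G u z))" by simp
    then show "\<exists>w \<in> ball G m y. z \<in> ball G (Suc k) w"
    proof
      assume "z \<in> ball G (m+k) y" then show ?thesis using Suc by auto
    next
      assume "z \<in> verts G \<and> (\<exists>u\<in>ball G (m+k) y. adj G u z)"
      then obtain u where "z \<in> verts G" "u \<in> ball G (m+k) y" "adj G u z" by blast
      then obtain w where "w \<in> ball G m y" "u \<in> ball G k w" using Suc by blast
      then show ?thesis using \<open>z \<in> verts G\<close> \<open>adj G u z\<close> by auto
    qed
  next
    assume "\<exists>w \<in> ball G m y. z \<in> ball G (Suc k) w"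
    then obtain w where w: "w \<in> ball G m y" "z \<in> ball G (Suc k) w" by blast
    then have "z \<in> ball G k w \<or> (z \<in> verts G \<and> (\<exists>u\<in>ball G k w. adj G u z))" by simp
    then show "z \<in> ball G (m + Suc k) y"
    proof
      assume "z \<in> ball G k w" then show ?thesis using Suc w by auto
    next
      assume "z \<in> verts G \<and> (\<exists>u\<in>ball G k w. adj G u z)"
      then obtain u where "z \<in> verts G" "u \<in> ball G k w" "adj G u z" by blast
      then have "u \<in> ball G (m+k) y" using Suc w by auto
      then show ?thesis using \<open>z \<in> verts G\<close> \<open>adj G u z\<close> by auto
    qed
  qed
qed

lemma ball_trans: "w \<in> ball G m y \<Longrightarrow> z \<in> ball G k w \<Longrightarrow> z \<in> ball G (m + k) y"
  using ball_add by blast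

lemma ball_one_sym:
  assumes "is_graph G"
  shows "z \<in> ball G 1 w \<longleftrightarrow> w \<in> ball G 1 z"
  using assms unfolding is_graph_def by auto

lemma ball_sym:
  assumes "is_graph G"
  shows "z \<in> ball G k y \<longleftrightarrow> y \<in> ball G k z"
proof (induction k arbitrary: y z)
  case 0
  then show ?case by auto
next
  case (Suc k)
  have "z \<in> ball G (Suc k) y \<longleftrightarrow> (\<exists>w \<in> ball G k y. z \<in> ball G 1 w)"
    using ball_add[of z G k 1 y] by simp
  also have "\<dots> \<longleftrightarrow> (\<exists>w \<in> ball G 1 z. y \<in> ball G k w)"
    using Suc ball_one_sym[OF assms] by blast
  also have "\<dots> \<longleftrightarrow> y \<in> ball G (Suc k) z"
    using ball_add[of y G 1 k z] by simp
  finally show ?case .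
qed

lemma finite_ball: "is_graph G \<Longrightarrow> finite (ball G k x)"
  by (rule finite_subset[OF ball_subset_verts]) (simp add: is_graph_def)

lemma card_ball_le:
  assumes "is_graph G" "max_degree_le d G"
  shows "card (ball G k x) \<le> (d+1)^k"
proof (induction k)
  case 0
  then show ?case by (simp add: card_le_Suc0_iff_eq)
next
  case (Suc k)
  have fin: "finite (ball G k x)" using finite_ball[OF assms(1)] .
  have "ball G (Suc k) x \<subseteq> ball G k x \<union> (\<Union>z\<in>ball G k x. {u \<in> verts G. adj G z u})" by auto
  moreover have "finite (\<Union>z\<in>ball G k x. {u \<in> verts G. adj G z u})"
    using fin assms(1) unfolding is_graph_def by auto
  ultimately have "card (ball G (Suc k) x) \<le> card (ball G k x) + card (\<Union>z\<in>ball G k x. {u \<in> verts G. adj G z u})"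
    by (metis (no_types, lifting) card_Un_le card_mono fin finite_UnI order_trans)
  also have "card (\<Union>z\<in>ball G k x. {u \<in> verts G. adj G z u}) \<le> (\<Sum>z\<in>ball G k x. card {u \<in> verts G. adj G z u})"
    by (rule card_UN_le[OF fin])
  also have "\<dots> \<le> (\<Sum>z\<in>ball G k x. d)"
    apply (rule sum_mono) using assms(2) ball_subset_verts unfolding max_degree_le_def by blast
  also have "\<dots> = card (ball G k x) * d" by simp
  finally have "card (ball G (Suc k) x) \<le> card (ball G k x) * (d+1)" by simp
  moreover have "card (ball G k x) * (d+1) \<le> (d+1)^k * (d+1)"
    using Suc.IH by (rule mult_right_mono) simp
  ultimately show ?case by (metis order_trans power_Suc2)
qed



lemma verts_induced[simp]: "verts (induced G S) = verts G \<inter> S"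
  by (simp add: induced_def)
lemma adj_induced[simp]: "adj (induced G S) x y \<longleftrightarrow> adj G x y \<and> x \<in> S \<and> y \<in> S"
  by (simp add: induced_def)

lemma is_graph_induced: "is_graph G \<Longrightarrow> is_graph (induced G S)"
  unfolding is_graph_def by auto

lemma ball_induced_sub: "ball (induced G S) k x \<subseteq> ball G k x"
  by (induction k) auto

lemma ball_in_induced_ball:
  "k \<le> r \<Longrightarrow> ball G k x \<subseteq> ball (induced G (ball G r x)) k x"
proof (induction k)
  case 0
  then show ?case using center_in_ball[of x G r] by auto
next
  case (Suc k)
  show ?case
  proof
    fix z assume z: "z \<in> ball G (Suc k) x"
    have zr: "z \<in> ball G r x" using ball_mono[OF Suc.prems] z by blast
    have "z \<in> ball G k x \<or> (z \<in> verts G \<and> (\<exists>u\<in>ball G k x. adj G u z))" using z by simp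
    then show "z \<in> ball (induced G (ball G r x)) (Suc k) x"
    proof
      assume "z \<in> ball G k x" then show ?thesis using Suc by auto
    next
      assume "z \<in> verts G \<and> (\<exists>u\<in>ball G k x. adj G u z)"
      then obtain u where u: "z \<in> verts G" "u \<in> ball G k x" "adj G u z" by blast
      have ur: "u \<in> ball G r x" using ball_mono[of k r] Suc.prems u(2) by auto
      have "u \<in> ball (induced G (ball G r x)) k x" using Suc u by auto
      then show ?thesis using u zr ur by auto
    qed
  qed
qed

lemma ball_induced_ball_eq: "ball (induced G (ball G r x)) r x = ball G r x"
  using ball_in_induced_ball[of r r G x] ball_induced_sub[of G "ball G r x" r x] by auto

lemma induced_induced_ball:
  "induced (induced G (ball G r x)) (ball (induced G (ball G r x)) r x) = induced G (ball G r x)"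
  unfolding ball_induced_ball_eq by (simp add: induced_def)

lemma connected_induced_ball:
  assumes "is_graph G"
  shows "connected_graph (induced G (ball G r x))"
  unfolding connected_graph_def
proof (intro ballI)
  let ?H = "induced G (ball G r x)"
  have H: "is_graph ?H" using is_graph_induced[OF assms] .
  fix a b assume a: "a \<in> verts ?H" and b: "b \<in> verts ?H"
  have "a \<in> ball ?H r x" "b \<in> ball ?H r x" using a b ball_induced_ball_eq[of G r x] by auto
  then have "x \<in> ball ?H r a" "b \<in> ball ?H r x" using ball_sym[OF H] by auto
  then have "b \<in> ball ?H (r + r) a" by (rule ball_trans)
  then show "\<exists>k. b \<in> ball ?H k a" by blast
qed

lemma max_degree_induced:
  assumes "is_graph G" "max_degree_le d G"
  shows "max_degree_le d (induced G S)"
  unfolding max_degree_le_def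
proof
  fix v assume v: "v \<in> verts (induced G S)"
  have "card {u \<in> verts (induced G S). adj (induced G S) v u} \<le> card {u \<in> verts G. adj G v u}"
    apply (rule card_mono) using assms(1) unfolding is_graph_def by auto
  also have "\<dots> \<le> d" using assms(2) v unfolding max_degree_le_def by auto
  finally show "card {u \<in> verts (induced G S). adj (induced G S) v u} \<le> d" .
qed

lemma rooted_iso_sym:
  assumes "rooted_iso G o1 H o2" "o1 \<in> verts G"
  shows "rooted_iso H o2 G o1"
proof -
  obtain f where f: "bij_betw f (verts G) (verts H)" "f o1 = o2"
    "\<forall>x \<in> verts G. \<forall>y \<in> verts G. adj H (f x) (f y) \<longleftrightarrow> adj G x y"
    using assms(1) unfolding rooted_iso_def by blast
  let ?g = "inv_into (verts G) f"
  have g: "bij_betw ?g (verts H) (verts G)" using bij_betw_inv_into[OF f(1)] .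
  have "?g o2 = o1" using f assms(2) bij_betw_inv_into_left by fastforce
  moreover have "\<forall>x \<in> verts H. \<forall>y \<in> verts H. adj G (?g x) (?g y) \<longleftrightarrow> adj H x y"
  proof (intro ballI)
    fix x y assume "x \<in> verts H" "y \<in> verts H"
    then show "adj G (?g x) (?g y) \<longleftrightarrow> adj H x y"
      using f g bij_betw_inv_into_right[OF f(1)] by (metis bij_betwE)
  qed
  ultimately show ?thesis using g unfolding rooted_iso_def by blast
qed

lemma rooted_iso_trans:
  assumes "rooted_iso G o1 H o2" "rooted_iso H o2 K o3"
  shows "rooted_iso G o1 K o3"
proof -
  obtain f where f: "bij_betw f (verts G) (verts H)" "f o1 = o2"
    "\<forall>x \<in> verts G. \<forall>y \<in> verts G. adj H (f x) (f y) \<longleftrightarrow> adj G x y"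
    using assms(1) unfolding rooted_iso_def by blast
  obtain g where g: "bij_betw g (verts H) (verts K)" "g o2 = o3"
    "\<forall>x \<in> verts H. \<forall>y \<in> verts H. adj K (g x) (g y) \<longleftrightarrow> adj H x y"
    using assms(2) unfolding rooted_iso_def by blast
  have "bij_betw (g \<circ> f) (verts G) (verts K)" using f(1) g(1) by (rule bij_betw_trans)
  moreover have "(g \<circ> f) o1 = o3" using f g by simp
  moreover have "\<forall>x \<in> verts G. \<forall>y \<in> verts G. adj K ((g\<circ>f) x) ((g\<circ>f) y) \<longleftrightarrow> adj G x y"
    using f g by (auto dest: bij_betwE)
  ultimately show ?thesis unfolding rooted_iso_def by blast
qed

lemma sat_iso:
  assumes f: "bij_betw f (verts G) (verts H)"
    and fa: "\<forall>x \<in> verts G. \<forall>y \<in> verts G. adj H (f x) (f y) \<longleftrightarrow> adj G x y"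
  shows "(\<forall>x \<in> free_vars \<phi>. \<sigma> x \<in> verts G \<and> \<sigma>' x = f (\<sigma> x)) \<Longrightarrow> sat G \<sigma> \<phi> \<longleftrightarrow> sat H \<sigma>' \<phi>"
proof (induction \<phi> arbitrary: \<sigma> \<sigma>')
  case (FEq x y)
  then show ?case using f by (auto simp: bij_betw_def inj_on_def)
next
  case (FAdj x y)
  then show ?case using fa by auto
next
  case (FNot \<phi>)
  then show ?case by auto
next
  case (FAnd \<phi>1 \<phi>2)
  have "sat G \<sigma> \<phi>1 = sat H \<sigma>' \<phi>1" by (rule FAnd.IH(1)) (use FAnd.prems in auto)
  moreover have "sat G \<sigma> \<phi>2 = sat H \<sigma>' \<phi>2" by (rule FAnd.IH(2)) (use FAnd.prems in auto)
  ultimately show ?case by simp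
next
  case (FOr \<phi>1 \<phi>2)
  have "sat G \<sigma> \<phi>1 = sat H \<sigma>' \<phi>1" by (rule FOr.IH(1)) (use FOr.prems in auto)
  moreover have "sat G \<sigma> \<phi>2 = sat H \<sigma>' \<phi>2" by (rule FOr.IH(2)) (use FOr.prems in auto)
  ultimately show ?case by simp
next
  case (FEx x \<phi>)
  show ?case
  proof
    assume "sat G \<sigma> (FEx x \<phi>)"
    then obtain v where v: "v \<in> verts G" "sat G (\<sigma>(x := v)) \<phi>" by auto
    have "sat G (\<sigma>(x := v)) \<phi> = sat H (\<sigma>'(x := f v)) \<phi>"
      by (rule FEx.IH) (use FEx.prems v in auto)
    then have "sat H (\<sigma>'(x := f v)) \<phi>" using v by simp
    moreover have "f v \<in> verts H" using f v(1) by (meson bij_betwE)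
    ultimately show "sat H \<sigma>' (FEx x \<phi>)" by auto
  next
    assume "sat H \<sigma>' (FEx x \<phi>)"
    then obtain w where w: "w \<in> verts H" "sat H (\<sigma>'(x := w)) \<phi>" by auto
    obtain v where v: "v \<in> verts G" "w = f v" using w(1) f by (metis bij_betw_imp_surj_on imageE)
    have "sat G (\<sigma>(x := v)) \<phi> = sat H (\<sigma>'(x := w)) \<phi>"
      by (rule FEx.IH) (use FEx.prems v w in auto)
    then have "sat G (\<sigma>(x := v)) \<phi>" using w by simp
    then show "sat G \<sigma> (FEx x \<phi>)" using v by auto
  qed
qed

lemma sat_cong:
  "(\<forall>x \<in> free_vars \<phi>. \<sigma> x = \<sigma>' x) \<Longrightarrow> sat G \<sigma> \<phi> \<longleftrightarrow> sat G \<sigma>' \<phi>"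
proof (induction \<phi> arbitrary: \<sigma> \<sigma>')
  case (FEx x \<phi>)
  have "\<And>v. sat G (\<sigma>(x:=v)) \<phi> \<longleftrightarrow> sat G (\<sigma>'(x:=v)) \<phi>"
    using FEx.IH FEx.prems by auto
  then show ?case by simp
next
  case (FAnd \<phi>1 \<phi>2)
  have "sat G \<sigma> \<phi>1 = sat G \<sigma>' \<phi>1" by (rule FAnd.IH(1)) (use FAnd.prems in auto)
  moreover have "sat G \<sigma> \<phi>2 = sat G \<sigma>' \<phi>2" by (rule FAnd.IH(2)) (use FAnd.prems in auto)
  ultimately show ?case by simp
next
  case (FOr \<phi>1 \<phi>2)
  have "sat G \<sigma> \<phi>1 = sat G \<sigma>' \<phi>1" by (rule FOr.IH(1)) (use FOr.prems in auto)
  moreover have "sat G \<sigma> \<phi>2 = sat G \<sigma>' \<phi>2" by (rule FOr.IH(2)) (use FOr.prems in auto)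
  ultimately show ?case by simp
qed auto



type_synonym cand = "nat \<times> (nat \<times> nat) set \<times> nat"

definition cg :: "cand \<Rightarrow> graph" where
  "cg c = \<lparr> verts = {0..<fst c}, adj = (\<lambda>a b. (a, b) \<in> fst (snd c)) \<rparr>"

definition croot :: "cand \<Rightarrow> nat" where "croot c = snd (snd c)"

definition Cand :: "nat \<Rightarrow> cand set" where
  "Cand M = {(m, E, q). m \<le> M \<and> E \<subseteq> {0..<m} \<times> {0..<m} \<and> q < m}"

lemma finite_Cand: "finite (Cand M)"
proof -
  have "Cand M \<subseteq> {0..M} \<times> Pow ({0..<M} \<times> {0..<M}) \<times> {0..<M}"
    unfolding Cand_def by auto
  then show ?thesis by (rule finite_subset) auto
qed

definition rtype :: "nat \<Rightarrow> nat \<Rightarrow> graph \<Rightarrow> nat \<Rightarrow> cand set" where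
  "rtype r M G x = {c \<in> Cand M. rooted_iso (induced G (ball G r x)) x (cg c) (croot c)}"

lemma rtype_sub: "rtype r M G x \<in> Pow (Cand M)"
  unfolding rtype_def by auto

lemma exists_cand:
  assumes G: "is_graph G" and M: "card (ball G r x) \<le> M" and x: "x \<in> verts G"
  shows "\<exists>c \<in> Cand M. rooted_iso (induced G (ball G r x)) x (cg c) (croot c)"
proof -
  let ?S = "ball G r x"
  have fin: "finite ?S" using finite_ball[OF G] .
  obtain h where h: "bij_betw h ?S {0..<card ?S}" using ex_bij_betw_finite_nat[OF fin] by blast
  define E where "E = (\<lambda>(a,b). (h a, h b)) ` {(a,b). a \<in> ?S \<and> b \<in> ?S \<and> adj G a b}"
  define c where "c = (card ?S, E, h x)"
  have xS: "x \<in> ?S" using center_in_ball[OF x] .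
  have hS: "\<And>a. a \<in> ?S \<Longrightarrow> h a \<in> {0..<card ?S}" using h by (meson bij_betwE)
  have inj: "inj_on h ?S" using h by (simp add: bij_betw_def)
  have "c \<in> Cand M" unfolding c_def Cand_def E_def using M hS xS by auto
  moreover have "rooted_iso (induced G ?S) x (cg c) (croot c)"
    unfolding rooted_iso_def
  proof (intro exI[of _ h] conjI)
    have "verts (induced G ?S) = ?S" using ball_subset_verts by auto
    then show "bij_betw h (verts (induced G ?S)) (verts (cg c))"
      using h by (simp add: cg_def c_def)
    show "h x = croot c" by (simp add: croot_def c_def)
    show "\<forall>a\<in>verts (induced G ?S). \<forall>b\<in>verts (induced G ?S). adj (cg c) (h a) (h b) = adj (induced G ?S) a b"
    proof (intro ballI)
      fix a b assume "a \<in> verts (induced G ?S)" "b \<in> verts (induced G ?S)"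
      then have ab: "a \<in> ?S" "b \<in> ?S" by auto
      have "(h a, h b) \<in> E \<longleftrightarrow> adj G a b"
      proof
        assume "(h a, h b) \<in> E"
        then obtain a' b' where "a' \<in> ?S" "b' \<in> ?S" "adj G a' b'" "h a = h a'" "h b = h b'"
          unfolding E_def by auto
        then show "adj G a b" using inj ab by (metis inj_onD)
      next
        assume "adj G a b" then show "(h a, h b) \<in> E" unfolding E_def using ab by auto
      qed
      then show "adj (cg c) (h a) (h b) = adj (induced G ?S) a b"
        using ab by (simp add: cg_def c_def)
    qed
  qed
  ultimately show ?thesis by blast
qed

lemma croot_in: "c \<in> Cand M \<Longrightarrow> croot c \<in> verts (cg c)"
  unfolding Cand_def croot_def cg_def by auto

lemma rtype_eq_iff:
  assumes G: "is_graph G" and G': "is_graph G'"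
    and M: "card (ball G r x) \<le> M" and x: "x \<in> verts G" and y: "y \<in> verts G'"
  shows "rtype r M G x = rtype r M G' y \<longleftrightarrow>
     rooted_iso (induced G (ball G r x)) x (induced G' (ball G' r y)) y"
proof
  assume eq: "rtype r M G x = rtype r M G' y"
  obtain c where c: "c \<in> Cand M" "rooted_iso (induced G (ball G r x)) x (cg c) (croot c)"
    using exists_cand[OF G M x] by blast
  then have "c \<in> rtype r M G' y" using eq unfolding rtype_def by auto
  then have "rooted_iso (induced G' (ball G' r y)) y (cg c) (croot c)" unfolding rtype_def by auto
  then have "rooted_iso (cg c) (croot c) (induced G' (ball G' r y)) y"
    using rooted_iso_sym y center_in_ball[OF y] by auto
  then show "rooted_iso (induced G (ball G r x)) x (induced G' (ball G' r y)) y"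
    using c(2) rooted_iso_trans by blast
next
  assume iso: "rooted_iso (induced G (ball G r x)) x (induced G' (ball G' r y)) y"
  have xin: "x \<in> verts (induced G (ball G r x))" using x center_in_ball[OF x] by auto
  have iso': "rooted_iso (induced G' (ball G' r y)) y (induced G (ball G r x)) x"
    using rooted_iso_sym[OF iso xin] .
  show "rtype r M G x = rtype r M G' y"
    unfolding rtype_def using rooted_iso_trans[OF iso] rooted_iso_trans[OF iso'] by blast
qed



definition far :: "graph \<Rightarrow> nat \<Rightarrow> nat \<Rightarrow> (nat \<Rightarrow> nat) \<Rightarrow> bool" where
  "far G r p v \<longleftrightarrow> (\<forall>i<p. \<forall>j<p. i \<noteq> j \<longrightarrow> v j \<notin> ball G (2*r+1) (v i))"

lemma far_disjoint:
  assumes G: "is_graph G" and f: "far G r p v" and ij: "i < p" "j < p" "i \<noteq> j"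
  shows "ball G r (v i) \<inter> ball G r (v j) = {}"
    and "a \<in> ball G r (v i) \<Longrightarrow> b \<in> ball G r (v j) \<Longrightarrow> \<not> adj G a b"
proof -
  have nf: "v j \<notin> ball G (2*r+1) (v i)" using f ij unfolding far_def by blast
  show "ball G r (v i) \<inter> ball G r (v j) = {}"
  proof (rule ccontr)
    assume "ball G r (v i) \<inter> ball G r (v j) \<noteq> {}"
    then obtain a where a: "a \<in> ball G r (v i)" "a \<in> ball G r (v j)" by blast
    then have "v j \<in> ball G r a" using ball_sym[OF G] by blast
    then have "v j \<in> ball G (r + r) (v i)" using a(1) by (rule ball_trans[rotated])
    then have "v j \<in> ball G (2*r+1) (v i)" using ball_mono[of "r+r" "2*r+1" G "v i"] by auto
    then show False using nf by blast
  qed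
  assume a: "a \<in> ball G r (v i)" and b: "b \<in> ball G r (v j)"
  show "\<not> adj G a b"
  proof
    assume ab: "adj G a b"
    then have "b \<in> ball G 1 a" using G unfolding is_graph_def by auto
    then have "b \<in> ball G (r + 1) (v i)" using a by (rule ball_trans[rotated])
    moreover have "v j \<in> ball G r b" using b ball_sym[OF G] by blast
    ultimately have "v j \<in> ball G (r + 1 + r) (v i)" by (rule ball_trans)
    moreover have "r + 1 + r = 2*r+1" by simp
    ultimately have "v j \<in> ball G (2*r+1) (v i)" by metis
    then show False using nf by blast
  qed
qed

lemma nbhd_verts:
  "verts (induced G (nbhd G r p v)) = nbhd G r p v"
  unfolding nbhd_def using ball_subset_verts by auto

lemma ball_eq_verts_induced: "verts (induced G (ball G r x)) = ball G r x"
  using ball_subset_verts by auto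

lemma nbhd_iso:
  assumes G: "is_graph G" and G': "is_graph G'"
    and fv: "far G r p v" and fw: "far G' r p w" and vV: "\<forall>i<p. v i \<in> verts G"
    and iso: "\<forall>i<p. rooted_iso (induced G (ball G r (v i))) (v i) (induced G' (ball G' r (w i))) (w i)"
  shows "\<exists>f. bij_betw f (verts (induced G (nbhd G r p v))) (verts (induced G' (nbhd G' r p w)))
    \<and> (\<forall>i<p. f (v i) = w i)
    \<and> (\<forall>x \<in> verts (induced G (nbhd G r p v)). \<forall>y \<in> verts (induced G (nbhd G r p v)).
          adj (induced G' (nbhd G' r p w)) (f x) (f y) \<longleftrightarrow> adj (induced G (nbhd G r p v)) x y)"
proof -
  let ?B = "\<lambda>i. ball G r (v i)" and ?B' = "\<lambda>i. ball G' r (w i)"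
  have "\<forall>i. \<exists>f. i < p \<longrightarrow> bij_betw f (?B i) (?B' i) \<and> f (v i) = w i
      \<and> (\<forall>x \<in> ?B i. \<forall>y \<in> ?B i. adj G' (f x) (f y) \<longleftrightarrow> adj G x y)"
  proof (intro allI)
    fix i
    show "\<exists>f. i < p \<longrightarrow> bij_betw f (?B i) (?B' i) \<and> f (v i) = w i
      \<and> (\<forall>x \<in> ?B i. \<forall>y \<in> ?B i. adj G' (f x) (f y) \<longleftrightarrow> adj G x y)"
    proof (cases "i < p")
    case False then show ?thesis by blast
    next
    case i: True
    obtain f where f: "bij_betw f (verts (induced G (?B i))) (verts (induced G' (?B' i)))"
      "f (v i) = w i"
      "\<forall>x \<in> verts (induced G (?B i)). \<forall>y \<in> verts (induced G (?B i)).
         adj (induced G' (?B' i)) (f x) (f y) \<longleftrightarrow> adj (induced G (?B i)) x y"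
      using iso i unfolding rooted_iso_def by blast
    have fb: "bij_betw f (?B i) (?B' i)" using f(1) unfolding ball_eq_verts_induced .
    have "\<forall>x \<in> ?B i. \<forall>y \<in> ?B i. adj G' (f x) (f y) \<longleftrightarrow> adj G x y"
    proof (intro ballI)
      fix x y assume xy: "x \<in> ?B i" "y \<in> ?B i"
      then have "f x \<in> ?B' i" "f y \<in> ?B' i" using fb by (meson bij_betwE)+
      then show "adj G' (f x) (f y) \<longleftrightarrow> adj G x y"
        using f(3) xy unfolding ball_eq_verts_induced by auto
    qed
    then show ?thesis using fb f(2) by blast
    qed
  qed
  then obtain F where F0: "\<forall>i. i < p \<longrightarrow> bij_betw (F i) (?B i) (?B' i) \<and> F i (v i) = w i
      \<and> (\<forall>x \<in> ?B i. \<forall>y \<in> ?B i. adj G' (F i x) (F i y) \<longleftrightarrow> adj G x y)"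
    by (metis choice)
  then have F: "\<And>i. i < p \<Longrightarrow> bij_betw (F i) (?B i) (?B' i)"
    "\<And>i. i < p \<Longrightarrow> F i (v i) = w i"
    "\<And>i x y. i < p \<Longrightarrow> x \<in> ?B i \<Longrightarrow> y \<in> ?B i \<Longrightarrow> adj G' (F i x) (F i y) \<longleftrightarrow> adj G x y"
    by auto
  define idx where "idx x = (SOME i. i < p \<and> x \<in> ?B i)" for x
  have idx: "idx x = i" if "i < p" "x \<in> ?B i" for i x
  proof -
    have ex: "idx x < p \<and> x \<in> ?B (idx x)" unfolding idx_def by (rule someI[of _ i]) (use that in simp)
    show ?thesis
    proof (rule ccontr)
      assume "idx x \<noteq> i"
      then have "?B i \<inter> ?B (idx x) = {}" using far_disjoint(1)[OF G fv \<open>i < p\<close>, of "idx x"] ex by auto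
      then show False using that ex by blast
    qed
  qed
  define f where "f x = F (idx x) x" for x
  have fB: "f x = F i x" if "i < p" "x \<in> ?B i" for i x using idx[OF that] f_def by simp
  have N: "verts (induced G (nbhd G r p v)) = (\<Union>i<p. ?B i)" using nbhd_verts[of G r p v] unfolding nbhd_def .
  have N': "verts (induced G' (nbhd G' r p w)) = (\<Union>i<p. ?B' i)" using nbhd_verts[of G' r p w] unfolding nbhd_def .
  have img: "f ` (\<Union>i<p. ?B i) = (\<Union>i<p. ?B' i)"
  proof -
    have "f ` (\<Union>i<p. ?B i) = (\<Union>i<p. f ` ?B i)" by blast
    also have "\<dots> = (\<Union>i<p. F i ` ?B i)"
      by (rule SUP_cong) (simp_all add: fB cong: image_cong)
    also have "\<dots> = (\<Union>i<p. ?B' i)"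
      by (rule SUP_cong) (simp_all add: bij_betw_imp_surj_on[OF F(1)])
    finally show ?thesis .
  qed
  have inj: "inj_on f (\<Union>i<p. ?B i)"
  proof (rule inj_onI)
    fix x y assume x: "x \<in> (\<Union>i<p. ?B i)" and y: "y \<in> (\<Union>i<p. ?B i)" and e: "f x = f y"
    obtain i where i: "i < p" "x \<in> ?B i" using x by blast
    obtain j where j: "j < p" "y \<in> ?B j" using y by blast
    have fx: "f x \<in> ?B' i" using fB[OF i] F(1)[OF i(1)] i(2) by (metis bij_betwE)
    have fy: "f y \<in> ?B' j" using fB[OF j] F(1)[OF j(1)] j(2) by (metis bij_betwE)
    show "x = y"
    proof (cases "i = j")
      case True
      have "F i x = F i y" using e fB[OF i] fB[OF j] True by simp
      then show ?thesis using F(1)[OF i(1)] i(2) j(2) True unfolding bij_betw_def inj_on_def by blast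
    next
      case False
      have dj: "?B' i \<inter> ?B' j = {}" by (rule far_disjoint(1)[OF G' fw i(1) j(1) False])
      have "f x \<in> ?B' i \<inter> ?B' j" using fx fy e by simp
      then show ?thesis using dj by simp
    qed
  qed
  have adjf: "adj (induced G' (nbhd G' r p w)) (f x) (f y) \<longleftrightarrow> adj (induced G (nbhd G r p v)) x y"
    if x: "x \<in> (\<Union>i<p. ?B i)" and y: "y \<in> (\<Union>i<p. ?B i)" for x y
  proof -
    obtain i where i: "i < p" "x \<in> ?B i" using x by blast
    obtain j where j: "j < p" "y \<in> ?B j" using y by blast
    have fx: "f x \<in> ?B' i" using fB[OF i] F(1)[OF i(1)] i(2) by (metis bij_betwE)
    have fy: "f y \<in> ?B' j" using fB[OF j] F(1)[OF j(1)] j(2) by (metis bij_betwE)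
    have inN: "x \<in> nbhd G r p v" "y \<in> nbhd G r p v" "f x \<in> nbhd G' r p w" "f y \<in> nbhd G' r p w"
      using i j fx fy unfolding nbhd_def by auto
    have "adj G' (f x) (f y) \<longleftrightarrow> adj G x y"
    proof (cases "i = j")
      case True
      then show ?thesis using F(3)[OF i(1) i(2)] j fB[OF i] fB[OF j] by simp
    next
      case False
      have "\<not> adj G x y" using far_disjoint(2)[OF G fv i(1) j(1) False i(2) j(2)] .
      moreover have "\<not> adj G' (f x) (f y)" using far_disjoint(2)[OF G' fw i(1) j(1) False fx fy] .
      ultimately show ?thesis by simp
    qed
    then show ?thesis using inN by simp
  qed
  have "bij_betw f (\<Union>i<p. ?B i) (\<Union>i<p. ?B' i)" using inj img by (simp add: bij_betw_def)
  moreover have "\<forall>i<p. f (v i) = w i"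
  proof (intro allI impI)
    fix i assume i: "i < p"
    have "v i \<in> ?B i" using center_in_ball vV i by blast
    then show "f (v i) = w i" using fB[OF i] F(2)[OF i] by simp
  qed
  ultimately show ?thesis unfolding N N' using adjf by blast
qed



lemma local_sat_eq:
  assumes G: "is_graph G" and G': "is_graph G'"
    and rl: "r_local p r \<phi>" and fvs: "free_vars \<phi> \<subseteq> {0..<p}"
    and v: "v \<in> {0..<p} \<rightarrow>\<^sub>E verts G" and w: "w \<in> {0..<p} \<rightarrow>\<^sub>E verts G'"
    and fv: "far G r p v" and fw: "far G' r p w"
    and iso: "\<forall>i<p. rooted_iso (induced G (ball G r (v i))) (v i) (induced G' (ball G' r (w i))) (w i)"
  shows "sat G v \<phi> \<longleftrightarrow> sat G' w \<phi>"
proof -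
  have vV: "\<forall>i<p. v i \<in> verts G" using v by auto
  obtain f where f: "bij_betw f (verts (induced G (nbhd G r p v))) (verts (induced G' (nbhd G' r p w)))"
    "\<forall>i<p. f (v i) = w i"
    "\<forall>x \<in> verts (induced G (nbhd G r p v)). \<forall>y \<in> verts (induced G (nbhd G r p v)).
          adj (induced G' (nbhd G' r p w)) (f x) (f y) \<longleftrightarrow> adj (induced G (nbhd G r p v)) x y"
    using nbhd_iso[OF G G' fv fw vV iso] by blast
  have "sat G v \<phi> \<longleftrightarrow> sat (induced G (nbhd G r p v)) v \<phi>"
    using rl G v unfolding r_local_def by blast
  also have "\<dots> \<longleftrightarrow> sat (induced G' (nbhd G' r p w)) w \<phi>"
  proof (rule sat_iso[OF f(1) f(3)])
    show "\<forall>x\<in>free_vars \<phi>. v x \<in> verts (induced G (nbhd G r p v)) \<and> w x = f (v x)"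
    proof
      fix x assume "x \<in> free_vars \<phi>"
      then have x: "x < p" using fvs by auto
      have "v x \<in> ball G r (v x)" using center_in_ball vV x by blast
      then have "v x \<in> nbhd G r p v" unfolding nbhd_def using x by blast
      then show "v x \<in> verts (induced G (nbhd G r p v)) \<and> w x = f (v x)"
        using nbhd_verts f(2) x by auto
    qed
  qed
  also have "\<dots> \<longleftrightarrow> sat G' w \<phi>"
    using rl G' w unfolding r_local_def by blast
  finally show ?thesis .
qed

lemma card_pair:
  fixes V :: "nat set" and R :: "nat \<Rightarrow> nat set"
  assumes V: "finite V" and R: "\<And>x. x \<in> V \<Longrightarrow> R x \<subseteq> V \<and> card (R x) \<le> B"
    and ij: "i < p" "j < p" "i \<noteq> j"
  shows "card {v \<in> {0..<p} \<rightarrow>\<^sub>E V. v j \<in> R (v i)} \<le> card V ^ (p - 1) * B"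
proof -
  let ?S = "{v \<in> {0..<p} \<rightarrow>\<^sub>E V. v j \<in> R (v i)}"
  let ?P = "({0..<p} - {j}) \<rightarrow>\<^sub>E V"
  define g where "g v = (restrict v ({0..<p} - {j}), v j)" for v :: "nat \<Rightarrow> nat"
  have inj: "inj_on g ?S"
  proof (rule inj_onI)
    fix v v' assume v: "v \<in> ?S" and v': "v' \<in> ?S" and e: "g v = g v'"
    have r: "restrict v ({0..<p} - {j}) = restrict v' ({0..<p} - {j})" and vj: "v j = v' j"
      using e by (simp_all only: g_def prod.inject)
    show "v = v'"
    proof
      fix k
      show "v k = v' k"
      proof (cases "k \<in> {0..<p}")
        case True
        show ?thesis
        proof (cases "k = j")
          case True then show ?thesis using vj by simp
        next
          case False
          have "restrict v ({0..<p} - {j}) k = restrict v' ({0..<p} - {j}) k"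
            using r by (rule fun_cong)
          then show ?thesis using False \<open>k \<in> {0..<p}\<close> by (simp only: restrict_apply' Diff_iff singleton_iff not_False_eq_True simp_thms)
        qed
      next
        case False
        have "v k = undefined" by (rule PiE_arb[of v "{0..<p}" "\<lambda>_. V"]) (use v False in auto)
        moreover have "v' k = undefined" by (rule PiE_arb[of v' "{0..<p}" "\<lambda>_. V"]) (use v' False in auto)
        ultimately show ?thesis by simp
      qed
    qed
  qed
  have sub: "g ` ?S \<subseteq> Sigma ?P (\<lambda>u. R (u i))"
  proof
    fix z assume "z \<in> g ` ?S"
    then obtain v where v: "v \<in> ?S" "z = g v" by blast
    have "restrict v ({0..<p} - {j}) \<in> ?P" using v(1) by (auto simp: restrict_PiE_iff)
    moreover have "restrict v ({0..<p} - {j}) i = v i" using ij by simp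
    ultimately show "z \<in> Sigma ?P (\<lambda>u. R (u i))" using v by (simp add: g_def)
  qed
  have finP: "finite ?P" using V by (simp add: finite_PiE)
  have uV: "u i \<in> V" if "u \<in> ?P" for u using PiE_mem[OF that, of i] ij by simp
  have finR: "\<forall>u\<in>?P. finite (R (u i))"
  proof
    fix u assume "u \<in> ?P"
    then have "R (u i) \<subseteq> V" using R uV by simp
    then show "finite (R (u i))" using V by (rule finite_subset)
  qed
  have "card ?S \<le> card (Sigma ?P (\<lambda>u. R (u i)))"
    by (rule card_inj_on_le[OF inj sub]) (use finP finR in simp)
  also have "\<dots> = (\<Sum>u\<in>?P. card (R (u i)))" using finP finR by simp
  also have "\<dots> \<le> (\<Sum>u\<in>?P. B)" by (rule sum_mono) (use R uV in simp)
  also have "\<dots> = card ?P * B" by simp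
  also have "card ?P = card V ^ (p - 1)"
    using ij by (simp add: card_PiE)
  finally show ?thesis .
qed

lemma card_nonfar:
  fixes V :: "nat set" and R :: "nat \<Rightarrow> nat set"
  assumes V: "finite V" and R: "\<And>x. x \<in> V \<Longrightarrow> R x \<subseteq> V \<and> card (R x) \<le> B"
  shows "card {v \<in> {0..<p} \<rightarrow>\<^sub>E V. \<exists>i<p. \<exists>j<p. i \<noteq> j \<and> v j \<in> R (v i)} \<le> p * p * (card V ^ (p - 1) * B)"
proof -
  let ?S = "\<lambda>i j. {v \<in> {0..<p} \<rightarrow>\<^sub>E V. i \<noteq> j \<and> v j \<in> R (v i)}"
  have "{v \<in> {0..<p} \<rightarrow>\<^sub>E V. \<exists>i<p. \<exists>j<p. i \<noteq> j \<and> v j \<in> R (v i)} = (\<Union>i\<in>{0..<p}. \<Union>j\<in>{0..<p}. ?S i j)"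
  proof (rule set_eqI, rule iffI)
    fix v assume "v \<in> {v \<in> {0..<p} \<rightarrow>\<^sub>E V. \<exists>i<p. \<exists>j<p. i \<noteq> j \<and> v j \<in> R (v i)}"
    then obtain i j where "v \<in> {0..<p} \<rightarrow>\<^sub>E V" "i < p" "j < p" "i \<noteq> j" "v j \<in> R (v i)" by blast
    then show "v \<in> (\<Union>i\<in>{0..<p}. \<Union>j\<in>{0..<p}. ?S i j)"
      by (intro UN_I[of i] UN_I[of j]) auto
  next
    fix v assume "v \<in> (\<Union>i\<in>{0..<p}. \<Union>j\<in>{0..<p}. ?S i j)"
    then obtain i j where "v \<in> {0..<p} \<rightarrow>\<^sub>E V" "i < p" "j < p" "i \<noteq> j" "v j \<in> R (v i)" by auto
    then show "v \<in> {v \<in> {0..<p} \<rightarrow>\<^sub>E V. \<exists>i<p. \<exists>j<p. i \<noteq> j \<and> v j \<in> R (v i)}" by blast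
  qed
  also have "card \<dots> \<le> (\<Sum>i\<in>{0..<p}. card (\<Union>j\<in>{0..<p}. ?S i j))" by (rule card_UN_le) simp
  also have "\<dots> \<le> (\<Sum>i\<in>{0..<p}. \<Sum>j\<in>{0..<p}. card (?S i j))"
    by (rule sum_mono) (rule card_UN_le, simp)
  also have "\<dots> \<le> (\<Sum>i\<in>{0..<p}. \<Sum>j\<in>{0..<p}. card V ^ (p - 1) * B)"
  proof (intro sum_mono)
    fix i j assume "i \<in> {0..<p}" "j \<in> {0..<p}"
    then show "card (?S i j) \<le> card V ^ (p - 1) * B"
      using card_pair[where i=i and j=j and p=p, OF V R] by (cases "i = j") auto
  qed
  also have "\<dots> = p * p * (card V ^ (p - 1) * B)" by simp
  finally show ?thesis .
qed



lemma density_conv: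
  fixes d :: nat and Gs :: "nat \<Rightarrow> graph"
  assumes gr: "\<And>n. is_graph (Gs n)" and deg: "\<And>n. max_degree_le d (Gs n)"
    and lim: "filterlim (\<lambda>n. card (verts (Gs n))) at_top sequentially"
    and BS: "BS_convergent d Gs" and \<phi>: "\<phi> \<in> FO_local_p p"
  shows "convergent (\<lambda>n. density p \<phi> (Gs n))"
proof -
  obtain r where rl: "r_local p r \<phi>" and fvs: "free_vars \<phi> \<subseteq> {0..<p}"
    using \<phi> unfolding FO_local_p_def by blast
  define M where "M = (d+1)^r"
  define V where "V n = verts (Gs n)" for n
  define N where "N n = card (V n)" for n
  define \<tau> where "\<tau> n x = rtype r M (Gs n) x" for n x
  define T where "T n v = restrict (\<lambda>i. \<tau> n (v i)) {0..<p}" for n v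
  define acc where "acc t \<longleftrightarrow> (\<exists>G' w. is_graph G' \<and> max_degree_le d G' \<and> w \<in> {0..<p} \<rightarrow>\<^sub>E verts G'
       \<and> far G' r p w \<and> restrict (\<lambda>i. rtype r M G' (w i)) {0..<p} = t \<and> sat G' w \<phi>)" for t
  define TT where "TT = {0..<p} \<rightarrow>\<^sub>E Pow (Cand M)"
  define q where "q n a = real (card {x \<in> V n. \<tau> n x = a}) / real (N n)" for n a
  define g where "g n = (\<Sum>t\<in>{t\<in>TT. acc t}. \<Prod>i\<in>{0..<p}. q n (t i))" for n
  define B where "B = (d+1)^(2*r+1)"
  have finV: "finite (V n)" for n using gr[of n] unfolding V_def is_graph_def by blast
  have ballM: "card (ball G' r x) \<le> M" if "is_graph G'" "max_degree_le d G'" for G' x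
    using card_ball_le[OF that] unfolding M_def .

  have key: "sat (Gs n) v \<phi> \<longleftrightarrow> acc (T n v)"
    if v: "v \<in> {0..<p} \<rightarrow>\<^sub>E V n" and fv: "far (Gs n) r p v" for n v
  proof
    assume s: "sat (Gs n) v \<phi>"
    show "acc (T n v)" unfolding acc_def
      by (rule exI[of _ "Gs n"], rule exI[of _ v]) (use gr deg v fv s in \<open>simp add: T_def \<tau>_def V_def\<close>)
  next
    assume "acc (T n v)"
    then obtain G' w where G': "is_graph G'" "max_degree_le d G'" and w: "w \<in> {0..<p} \<rightarrow>\<^sub>E verts G'"
      and fw: "far G' r p w" and tw: "restrict (\<lambda>i. rtype r M G' (w i)) {0..<p} = T n v"
      and s: "sat G' w \<phi>"
      unfolding acc_def by blast
    have v': "v \<in> {0..<p} \<rightarrow>\<^sub>E verts (Gs n)" using v unfolding V_def .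
    have iso: "\<forall>i<p. rooted_iso (induced (Gs n) (ball (Gs n) r (v i))) (v i) (induced G' (ball G' r (w i))) (w i)"
    proof (intro allI impI)
      fix i assume i: "i < p"
      have "rtype r M G' (w i) = \<tau> n (v i)" using fun_cong[OF tw, of i] i by (simp add: T_def)
      then have "rtype r M (Gs n) (v i) = rtype r M G' (w i)" by (simp add: \<tau>_def)
      moreover have "v i \<in> verts (Gs n)" "w i \<in> verts G'" using v' w i by auto
      ultimately show "rooted_iso (induced (Gs n) (ball (Gs n) r (v i))) (v i) (induced G' (ball G' r (w i))) (w i)"
        using rtype_eq_iff[OF gr G'(1) ballM[OF gr deg]] by blast
    qed
    have "sat (Gs n) v \<phi> \<longleftrightarrow> sat G' w \<phi>"
      by (rule local_sat_eq[OF gr G'(1) rl fvs v' w fv fw iso])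
    then show "sat (Gs n) v \<phi>" using s by simp
  qed
  have qconv: "convergent (\<lambda>n. q n a)" for a
  proof (cases "\<exists>k x. x \<in> V k \<and> \<tau> k x = a")
    case True
    then obtain k w where w: "w \<in> V k" "\<tau> k w = a" by blast
    let ?F = "induced (Gs k) (ball (Gs k) r w)"
    have wk: "w \<in> verts (Gs k)" using w V_def by simp
    have eq: "{x \<in> V n. \<tau> n x = a} = {x \<in> verts (Gs n). rooted_iso (induced (Gs n) (ball (Gs n) r x)) x ?F w}" for n
    proof -
      have "\<tau> n x = a \<longleftrightarrow> rooted_iso (induced (Gs n) (ball (Gs n) r x)) x ?F w" if "x \<in> verts (Gs n)" for x
        using rtype_eq_iff[OF gr gr ballM[OF gr deg] that wk] w(2) unfolding \<tau>_def by simp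
      then show ?thesis unfolding V_def by blast
    qed
    have F1: "is_graph ?F" using is_graph_induced[OF gr] .
    have F2: "w \<in> verts ?F" using wk center_in_ball[OF wk] by simp
    have F3: "connected_graph ?F" using connected_induced_ball[OF gr] .
    have F4: "max_degree_le d ?F" using max_degree_induced[OF gr deg] .
    have "convergent (\<lambda>n. real (card {v \<in> verts (Gs n).
                rooted_iso (induced (Gs n) (ball (Gs n) r v)) v ?F w}) / real (card (verts (Gs n))))"
      using BS F1 F2 F3 F4 unfolding BS_convergent_def by blast
    moreover have "q n a = real (card {v \<in> verts (Gs n).
                rooted_iso (induced (Gs n) (ball (Gs n) r v)) v ?F w}) / real (card (verts (Gs n)))" for n
      unfolding q_def using eq[of n] by (simp add: N_def V_def)
    ultimately show ?thesis by simp
  next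
    case False
    then have e: "{x \<in> V n. \<tau> n x = a} = {}" for n by blast
    have "q n a = 0" for n unfolding q_def e by simp
    then show ?thesis by (simp add: convergent_const)
  qed
  then have qlim: "(\<lambda>n. q n a) \<longlonglongrightarrow> lim (\<lambda>n. q n a)" for a
    using convergent_LIMSEQ_iff by blast
  have finTT: "finite TT" unfolding TT_def by (intro finite_PiE) (simp_all add: finite_Cand)
  have gconv: "g \<longlonglongrightarrow> (\<Sum>t\<in>{t\<in>TT. acc t}. \<Prod>i\<in>{0..<p}. lim (\<lambda>n. q n (t i)))"
    unfolding g_def by (intro tendsto_sum tendsto_prod qlim)
  have TinTT: "T n v \<in> TT" for n v
    unfolding T_def TT_def \<tau>_def using rtype_sub by auto
  define Sacc where "Sacc n = {v \<in> {0..<p} \<rightarrow>\<^sub>E V n. acc (T n v)}" for n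
  have Tset: "{v \<in> {0..<p} \<rightarrow>\<^sub>E V n. T n v = t} = PiE {0..<p} (\<lambda>i. {x \<in> V n. \<tau> n x = t i})"
    if t: "t \<in> TT" for n t
  proof
    show "{v \<in> {0..<p} \<rightarrow>\<^sub>E V n. T n v = t} \<subseteq> PiE {0..<p} (\<lambda>i. {x \<in> V n. \<tau> n x = t i})"
    proof
      fix v assume v: "v \<in> {v \<in> {0..<p} \<rightarrow>\<^sub>E V n. T n v = t}"
      then have "\<tau> n (v i) = t i" if "i < p" for i using that by (auto simp: T_def)
      then show "v \<in> PiE {0..<p} (\<lambda>i. {x \<in> V n. \<tau> n x = t i})" using v by auto
    qed
    show "PiE {0..<p} (\<lambda>i. {x \<in> V n. \<tau> n x = t i}) \<subseteq> {v \<in> {0..<p} \<rightarrow>\<^sub>E V n. T n v = t}"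
    proof
      fix v assume v: "v \<in> PiE {0..<p} (\<lambda>i. {x \<in> V n. \<tau> n x = t i})"
      have "T n v = t"
      proof
        fix i show "T n v i = t i"
        proof (cases "i < p")
          case True then show ?thesis using v by (auto simp: T_def)
        next
          case False
          then have "t i = undefined" using t unfolding TT_def by (intro PiE_arb[of t "{0..<p}"]) auto
          then show ?thesis using False by (simp add: T_def)
        qed
      qed
      then show "v \<in> {v \<in> {0..<p} \<rightarrow>\<^sub>E V n. T n v = t}" using v by auto
    qed
  qed
  have finPi: "finite ({0..<p} \<rightarrow>\<^sub>E V n)" for n using finV by (simp add: finite_PiE)
  have finSub: "finite {v \<in> {0..<p} \<rightarrow>\<^sub>E V n. P v}" for n P by (rule finite_subset[OF _ finPi]) auto
  have card_Sacc: "card (Sacc n) = (\<Sum>t\<in>{t\<in>TT. acc t}. \<Prod>i\<in>{0..<p}. card {x \<in> V n. \<tau> n x = t i})" for n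
  proof -
    have "Sacc n = (\<Union>t\<in>{t\<in>TT. acc t}. {v \<in> {0..<p} \<rightarrow>\<^sub>E V n. T n v = t})"
      using TinTT unfolding Sacc_def by auto
    then have "card (Sacc n) = (\<Sum>t\<in>{t\<in>TT. acc t}. card {v \<in> {0..<p} \<rightarrow>\<^sub>E V n. T n v = t})"
      by (simp, intro card_UN_disjoint) (use finTT finSub in auto)
    also have "\<dots> = (\<Sum>t\<in>{t\<in>TT. acc t}. \<Prod>i\<in>{0..<p}. card {x \<in> V n. \<tau> n x = t i})"
      by (rule sum.cong) (simp_all add: Tset card_PiE)
    finally show ?thesis .
  qed
  have g_eq: "g n = real (card (Sacc n)) / real (N n) ^ p" for n
  proof -
    have "g n = (\<Sum>t\<in>{t\<in>TT. acc t}. (\<Prod>i\<in>{0..<p}. real (card {x \<in> V n. \<tau> n x = t i})) / real (N n) ^ p)"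
      unfolding g_def q_def by (simp add: prod_dividef)
    also have "\<dots> = real (card (Sacc n)) / real (N n) ^ p"
      unfolding card_Sacc by (simp add: sum_divide_distrib)
    finally show ?thesis .
  qed
  define Ssat where "Ssat n = {v \<in> {0..<p} \<rightarrow>\<^sub>E V n. sat (Gs n) v \<phi>}" for n
  define NF where "NF n = {v \<in> {0..<p} \<rightarrow>\<^sub>E V n. \<not> far (Gs n) r p v}" for n
  have dens: "density p \<phi> (Gs n) = real (card (Ssat n)) / real (N n) ^ p" for n
    unfolding density_def Ssat_def N_def V_def ..
  have cardNF: "card (NF n) \<le> p * p * (N n ^ (p - 1) * B)" for n
  proof -
    have "NF n = {v \<in> {0..<p} \<rightarrow>\<^sub>E V n. \<exists>i<p. \<exists>j<p. i \<noteq> j \<and> v j \<in> ball (Gs n) (2*r+1) (v i)}"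
      unfolding NF_def far_def by (simp only: not_all not_imp not_not)
    also have "card \<dots> \<le> p * p * (card (V n) ^ (p - 1) * B)"
    proof (rule card_nonfar[OF finV])
      fix x assume "x \<in> V n"
      show "ball (Gs n) (2*r+1) x \<subseteq> V n \<and> card (ball (Gs n) (2*r+1) x) \<le> B"
        using ball_subset_verts[of "Gs n" "2*r+1" x] card_ball_le[OF gr deg, of n "2*r+1" x] unfolding V_def B_def by simp
    qed
    finally show ?thesis unfolding N_def .
  qed
  have sub1: "Ssat n \<subseteq> Sacc n \<union> NF n" for n
  proof
    fix v assume v: "v \<in> Ssat n"
    show "v \<in> Sacc n \<union> NF n"
    proof (cases "far (Gs n) r p v")
      case True
      then have "acc (T n v)" using key[of v n] v unfolding Ssat_def by simp
      then show ?thesis using v unfolding Ssat_def Sacc_def by simp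
    next
      case False
      then show ?thesis using v unfolding Ssat_def NF_def by simp
    qed
  qed
  have sub2: "Sacc n \<subseteq> Ssat n \<union> NF n" for n
  proof
    fix v assume v: "v \<in> Sacc n"
    show "v \<in> Ssat n \<union> NF n"
    proof (cases "far (Gs n) r p v")
      case True
      then have "sat (Gs n) v \<phi>" using key[of v n] v unfolding Sacc_def by simp
      then show ?thesis using v unfolding Ssat_def Sacc_def by simp
    next
      case False
      then show ?thesis using v unfolding Sacc_def NF_def by simp
    qed
  qed
  have finNF: "finite (NF n)" for n unfolding NF_def by (rule finSub)
  have finSacc: "finite (Sacc n)" for n unfolding Sacc_def by (rule finSub)
  have finSsat: "finite (Ssat n)" for n unfolding Ssat_def by (rule finSub)
  have c1: "card (Ssat n) \<le> card (Sacc n) + card (NF n)" for n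
  proof -
    have "card (Ssat n) \<le> card (Sacc n \<union> NF n)" by (rule card_mono[OF _ sub1[of n]]) (simp add: finNF finSacc)
    also have "\<dots> \<le> card (Sacc n) + card (NF n)" by (rule card_Un_le)
    finally show ?thesis .
  qed
  have c2: "card (Sacc n) \<le> card (Ssat n) + card (NF n)" for n
  proof -
    have "card (Sacc n) \<le> card (Ssat n \<union> NF n)" by (rule card_mono[OF _ sub2[of n]]) (simp add: finNF finSsat)
    also have "\<dots> \<le> card (Ssat n) + card (NF n)" by (rule card_Un_le)
    finally show ?thesis .
  qed
  define c where "c = real (p * p * B)"
  have bound: "\<bar>density p \<phi> (Gs n) - g n\<bar> \<le> c / real (N n)" if Npos: "N n > 0" for n
  proof -
    have Np: "real (N n) ^ p > 0" using Npos by simp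
    have r1: "real (card (Ssat n)) \<le> real (card (Sacc n)) + real (card (NF n))"
      using c1[of n] by (metis of_nat_add of_nat_le_iff)
    have r2: "real (card (Sacc n)) \<le> real (card (Ssat n)) + real (card (NF n))"
      using c2[of n] by (metis of_nat_add of_nat_le_iff)
    have ab: "\<bar>real (card (Ssat n)) - real (card (Sacc n))\<bar> \<le> real (card (NF n))"
      using r1 r2 by linarith
    have "\<bar>density p \<phi> (Gs n) - g n\<bar> = \<bar>real (card (Ssat n)) - real (card (Sacc n))\<bar> / real (N n) ^ p"
      unfolding dens g_eq using Np by (simp add: diff_divide_distrib[symmetric])
    also have "\<dots> \<le> real (card (NF n)) / real (N n) ^ p"
      using ab Np by (simp add: divide_right_mono)
    also have "\<dots> \<le> real (p * p * (N n ^ (p - 1) * B)) / real (N n) ^ p"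
      using cardNF[of n] Np by (simp add: divide_right_mono del: of_nat_mult of_nat_power)
    also have "\<dots> = c / real (N n)"
    proof (cases p)
      case 0 then show ?thesis by (simp add: c_def)
    next
      case (Suc m)
      have X: "real (N n) ^ m > 0" using Npos by simp
      have pm: "p - 1 = m" using Suc by simp
      have "p * p * (N n ^ (p - 1) * B) = (p * p * B) * N n ^ (p - 1)" by (simp only: ac_simps)
      then have "p * p * (N n ^ (p - 1) * B) = (p * p * B) * N n ^ m" unfolding pm .
      then have e1: "real (p * p * (N n ^ (p - 1) * B)) = c * real (N n) ^ m"
        unfolding c_def by (metis of_nat_mult of_nat_power)
      have e2: "real (N n) ^ p = real (N n) * real (N n) ^ m" unfolding Suc by simp
      show ?thesis unfolding e1 e2 using X by simp
    qed
    finally show ?thesis .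
  qed
  have Nreal: "filterlim (\<lambda>n. real (N n)) at_top sequentially"
    unfolding N_def V_def using filterlim_compose[OF filterlim_real_sequentially lim] by (simp add: o_def)
  have ev: "eventually (\<lambda>n. N n > 0) sequentially"
  proof -
    have "eventually (\<lambda>n. 1 \<le> real (N n)) sequentially" using Nreal unfolding filterlim_at_top by blast
    then show ?thesis by (rule eventually_mono) simp
  qed
  have b2: "- (c / real (N n)) \<le> density p \<phi> (Gs n) - g n \<and> density p \<phi> (Gs n) - g n \<le> c / real (N n)"
    if "N n > 0" for n using bound[OF that] by (auto simp: abs_le_iff)
  have c0: "(\<lambda>n. c / real (N n)) \<longlonglongrightarrow> 0"
    by (rule tendsto_divide_0[OF tendsto_const filterlim_at_top_imp_at_infinity[OF Nreal]])
  have e0: "(\<lambda>n. density p \<phi> (Gs n) - g n) \<longlonglongrightarrow> 0"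
  proof (rule tendsto_sandwich[of "\<lambda>n. - (c / real (N n))" _ _ "\<lambda>n. c / real (N n)"])
    show "eventually (\<lambda>n. - (c / real (N n)) \<le> density p \<phi> (Gs n) - g n) sequentially"
      using ev by (rule eventually_mono) (use b2 in blast)
    show "eventually (\<lambda>n. density p \<phi> (Gs n) - g n \<le> c / real (N n)) sequentially"
      using ev by (rule eventually_mono) (use b2 in blast)
    show "(\<lambda>n. - (c / real (N n))) \<longlonglongrightarrow> 0" using tendsto_minus[OF c0] by simp
    show "(\<lambda>n. c / real (N n)) \<longlonglongrightarrow> 0" by (rule c0)
  qed
  have "(\<lambda>n. (density p \<phi> (Gs n) - g n) + g n) \<longlonglongrightarrow> 0 + (\<Sum>t\<in>{t\<in>TT. acc t}. \<Prod>i\<in>{0..<p}. lim (\<lambda>n. q n (t i)))"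
    by (rule tendsto_add[OF e0 gconv])
  then show ?thesis unfolding convergent_def by auto
qed


fun dist_f :: "nat \<Rightarrow> nat \<Rightarrow> nat \<Rightarrow> nat \<Rightarrow> fo" where
  "dist_f N 0 a z = FEq a z"
| "dist_f N (Suc k) a z = FOr (dist_f N k a z) (FEx (N+k) (FAnd (dist_f N k a (N+k)) (FAdj (N+k) z)))"

lemma dist_sem:
  "a < N \<Longrightarrow> (z < N \<or> N + k \<le> z) \<Longrightarrow> \<sigma> a \<in> verts G \<Longrightarrow> \<sigma> z \<in> verts G \<Longrightarrow>
   sat G \<sigma> (dist_f N k a z) \<longleftrightarrow> \<sigma> z \<in> ball G k (\<sigma> a)"
proof (induction k arbitrary: \<sigma> z)
  case 0
  then show ?case by auto
next
  case (Suc k)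
  have A: "sat G \<sigma> (dist_f N k a z) \<longleftrightarrow> \<sigma> z \<in> ball G k (\<sigma> a)"
    by (rule Suc.IH) (use Suc.prems in auto)
  have B: "sat G (\<sigma>(N+k := u)) (FAnd (dist_f N k a (N+k)) (FAdj (N+k) z)) \<longleftrightarrow>
      u \<in> ball G k (\<sigma> a) \<and> adj G u (\<sigma> z)" if u: "u \<in> verts G" for u
  proof -
    have zk: "z \<noteq> N + k" using Suc.prems by auto
    have ak: "a \<noteq> N + k" using Suc.prems by auto
    have "sat G (\<sigma>(N+k := u)) (dist_f N k a (N+k)) \<longleftrightarrow> (\<sigma>(N+k := u)) (N+k) \<in> ball G k ((\<sigma>(N+k := u)) a)"
      by (rule Suc.IH) (use Suc.prems u ak in auto)
    then show ?thesis using zk ak by simp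
  qed
  have "sat G \<sigma> (dist_f N (Suc k) a z) \<longleftrightarrow>
      \<sigma> z \<in> ball G k (\<sigma> a) \<or> (\<exists>u \<in> verts G. u \<in> ball G k (\<sigma> a) \<and> adj G u (\<sigma> z))"
    using A B by simp
  also have "\<dots> \<longleftrightarrow> \<sigma> z \<in> ball G (Suc k) (\<sigma> a)"
    using Suc.prems ball_subset_verts[of G k "\<sigma> a"] by auto
  finally show ?case .
qed

lemma dist_fv: "free_vars (dist_f N k a z) \<subseteq> {a, z}"
  by (induction k arbitrary: z) auto

fun conjs :: "fo list \<Rightarrow> fo" where
  "conjs [] = FEq 0 0"
| "conjs (f # fs) = FAnd f (conjs fs)"

fun disjs :: "fo list \<Rightarrow> fo" where
  "disjs [] = FNot (FEq 0 0)"
| "disjs (f # fs) = FOr f (disjs fs)"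

fun exs :: "nat list \<Rightarrow> fo \<Rightarrow> fo" where
  "exs [] f = f"
| "exs (x # xs) f = FEx x (exs xs f)"

lemma conjs_sem: "sat G \<sigma> (conjs fs) \<longleftrightarrow> (\<forall>f \<in> set fs. sat G \<sigma> f)"
  by (induction fs) auto
lemma disjs_sem: "sat G \<sigma> (disjs fs) \<longleftrightarrow> (\<exists>f \<in> set fs. sat G \<sigma> f)"
  by (induction fs) auto
lemma conjs_fv: "free_vars (conjs fs) \<subseteq> {0} \<union> (\<Union>f \<in> set fs. free_vars f)"
  by (induction fs) auto
lemma disjs_fv: "free_vars (disjs fs) \<subseteq> {0} \<union> (\<Union>f \<in> set fs. free_vars f)"
  by (induction fs) auto
lemma exs_fv: "free_vars (exs xs f) = free_vars f - set xs"
  by (induction xs) auto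

lemma exs_sem:
  "sat G \<sigma> (exs xs f) \<longleftrightarrow>
   (\<exists>\<tau>. (\<forall>y. y \<notin> set xs \<longrightarrow> \<tau> y = \<sigma> y) \<and> (\<forall>y \<in> set xs. \<tau> y \<in> verts G) \<and> sat G \<tau> f)"
proof (induction xs arbitrary: \<sigma>)
  case Nil
  have "(\<forall>y. \<tau> y = \<sigma> y) \<longleftrightarrow> \<tau> = \<sigma>" for \<tau> :: "nat \<Rightarrow> nat" by auto
  then show ?case by auto
next
  case (Cons x xs)
  show ?case
  proof
    assume "sat G \<sigma> (exs (x # xs) f)"
    then obtain u where u: "u \<in> verts G" "sat G (\<sigma>(x := u)) (exs xs f)" by auto
    then obtain \<tau> where t: "\<forall>y. y \<notin> set xs \<longrightarrow> \<tau> y = (\<sigma>(x := u)) y" "\<forall>y \<in> set xs. \<tau> y \<in> verts G" "sat G \<tau> f"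
      using Cons.IH by blast
    have "\<forall>y. y \<notin> set (x # xs) \<longrightarrow> \<tau> y = \<sigma> y" using t(1) by auto
    moreover have "\<forall>y \<in> set (x # xs). \<tau> y \<in> verts G"
      using t(1,2) u(1) by (metis fun_upd_same set_ConsD)
    ultimately show "\<exists>\<tau>. (\<forall>y. y \<notin> set (x # xs) \<longrightarrow> \<tau> y = \<sigma> y) \<and> (\<forall>y \<in> set (x # xs). \<tau> y \<in> verts G) \<and> sat G \<tau> f"
      using t(3) by blast
  next
    assume "\<exists>\<tau>. (\<forall>y. y \<notin> set (x # xs) \<longrightarrow> \<tau> y = \<sigma> y) \<and> (\<forall>y \<in> set (x # xs). \<tau> y \<in> verts G) \<and> sat G \<tau> f"
    then obtain \<tau> where t: "\<forall>y. y \<notin> set (x # xs) \<longrightarrow> \<tau> y = \<sigma> y" "\<forall>y \<in> set (x # xs). \<tau> y \<in> verts G" "sat G \<tau> f"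
      by blast
    have "\<forall>y. y \<notin> set xs \<longrightarrow> \<tau> y = (\<sigma>(x := \<tau> x)) y" using t(1) by auto
    moreover have "\<forall>y \<in> set xs. \<tau> y \<in> verts G" using t(2) by simp
    ultimately have "sat G (\<sigma>(x := \<tau> x)) (exs xs f)" using Cons.IH t(3) by blast
    moreover have "\<tau> x \<in> verts G" using t(2) by simp
    ultimately show "sat G \<sigma> (exs (x # xs) f)" by auto
  qed
qed



definition DistF :: "nat \<Rightarrow> fo" where
  "DistF m = conjs [FNot (FEq j k). j \<leftarrow> [0..<m], k \<leftarrow> [0..<m], j \<noteq> k]"
definition adjlit :: "graph \<Rightarrow> nat list \<Rightarrow> nat \<Rightarrow> nat \<Rightarrow> fo" where
  "adjlit F ws j k = (if adj F (ws!j) (ws!k) then FAdj j k else FNot (FAdj j k))"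
definition AdjF :: "graph \<Rightarrow> nat list \<Rightarrow> fo" where
  "AdjF F ws = conjs [adjlit F ws j k. j \<leftarrow> [0..<length ws], k \<leftarrow> [0..<length ws]]"
definition InbF :: "nat \<Rightarrow> nat \<Rightarrow> fo" where
  "InbF m r = conjs [dist_f (m+1) r 0 j. j \<leftarrow> [0..<m]]"
definition CovF :: "nat \<Rightarrow> nat \<Rightarrow> fo" where
  "CovF m r = FNot (FEx m (FAnd (dist_f (m+1) r 0 m) (FNot (disjs [FEq m j. j \<leftarrow> [0..<m]]))))"
definition iso_formula :: "graph \<Rightarrow> nat list \<Rightarrow> nat \<Rightarrow> fo" where
  "iso_formula F ws r = exs [1..<length ws]
     (FAnd (DistF (length ws)) (FAnd (AdjF F ws) (FAnd (InbF (length ws) r) (CovF (length ws) r))))"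

lemma DistF_sem: "sat G \<tau> (DistF m) \<longleftrightarrow> (\<forall>j<m. \<forall>k<m. j \<noteq> k \<longrightarrow> \<tau> j \<noteq> \<tau> k)"
  unfolding DistF_def conjs_sem by auto

lemma AdjF_sem: "sat G \<tau> (AdjF F ws) \<longleftrightarrow>
    (\<forall>j<length ws. \<forall>k<length ws. adj G (\<tau> j) (\<tau> k) \<longleftrightarrow> adj F (ws!j) (ws!k))"
proof -
  have "sat G \<tau> (adjlit F ws j k) \<longleftrightarrow> (adj G (\<tau> j) (\<tau> k) \<longleftrightarrow> adj F (ws!j) (ws!k))" for j k
    by (simp add: adjlit_def)
  moreover have "sat G \<tau> (AdjF F ws) \<longleftrightarrow> (\<forall>j<length ws. \<forall>k<length ws. sat G \<tau> (adjlit F ws j k))"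
    unfolding AdjF_def conjs_sem by auto
  ultimately show ?thesis by simp
qed

lemma InbF_sem:
  assumes "\<forall>j<m. \<tau> j \<in> verts G" "0 < m"
  shows "sat G \<tau> (InbF m r) \<longleftrightarrow> (\<forall>j<m. \<tau> j \<in> ball G r (\<tau> 0))"
proof -
  have "sat G \<tau> (dist_f (m+1) r 0 j) \<longleftrightarrow> \<tau> j \<in> ball G r (\<tau> 0)" if "j < m" for j
    by (rule dist_sem) (use assms that in auto)
  then show ?thesis unfolding InbF_def conjs_sem by auto
qed

lemma CovF_sem:
  assumes "\<tau> 0 \<in> verts G" "0 < m"
  shows "sat G \<tau> (CovF m r) \<longleftrightarrow> (\<forall>u \<in> verts G. u \<in> ball G r (\<tau> 0) \<longrightarrow> (\<exists>j<m. u = \<tau> j))"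
proof -
  have D: "sat G (\<tau>(m := u)) (dist_f (m+1) r 0 m) \<longleftrightarrow> u \<in> ball G r (\<tau> 0)" if "u \<in> verts G" for u
  proof -
    have "sat G (\<tau>(m := u)) (dist_f (m+1) r 0 m) \<longleftrightarrow> (\<tau>(m := u)) m \<in> ball G r ((\<tau>(m := u)) 0)"
      by (rule dist_sem) (use assms that in auto)
    then show ?thesis using assms by simp
  qed
  have E: "sat G (\<tau>(m := u)) (disjs [FEq m j. j \<leftarrow> [0..<m]]) \<longleftrightarrow> (\<exists>j<m. u = \<tau> j)" for u
    unfolding disjs_sem by auto
  show ?thesis unfolding CovF_def using D E by auto
qed



lemma iso_formula_sem:
  assumes ws: "distinct ws" "set ws = verts F" "ws \<noteq> []"
    and x: "\<sigma> 0 \<in> verts H"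
  shows "sat H \<sigma> (iso_formula F ws r) \<longleftrightarrow>
    rooted_iso (induced H (ball H r (\<sigma> 0))) (\<sigma> 0) F (ws!0)"
proof -
  define m where "m = length ws"
  have m0: "0 < m" using ws(3) unfolding m_def by simp
  define B where "B = ball H r (\<sigma> 0)"
  have BV: "B \<subseteq> verts H" unfolding B_def by (rule ball_subset_verts)
  have vB: "verts (induced H B) = B" using BV by auto
  have xB: "\<sigma> 0 \<in> B" unfolding B_def using center_in_ball[OF x] .
  have e: "bij_betw ((!) ws) {..<m} (verts F)" using bij_betw_nth[OF ws(1) _ ws(2)[symmetric]] m_def by simp
  have body: "sat H \<tau> (FAnd (DistF m) (FAnd (AdjF F ws) (FAnd (InbF m r) (CovF m r)))) \<longleftrightarrow>
      (\<forall>j<m. \<forall>k<m. j \<noteq> k \<longrightarrow> \<tau> j \<noteq> \<tau> k) \<and>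
      (\<forall>j<m. \<forall>k<m. adj H (\<tau> j) (\<tau> k) \<longleftrightarrow> adj F (ws!j) (ws!k)) \<and>
      (\<forall>j<m. \<tau> j \<in> B) \<and>
      (\<forall>u \<in> verts H. u \<in> B \<longrightarrow> (\<exists>j<m. u = \<tau> j))"
    if tV: "\<forall>j<m. \<tau> j \<in> verts H" and t0: "\<tau> 0 = \<sigma> 0" for \<tau>
    using DistF_sem[of H \<tau> m] AdjF_sem[of H \<tau> F ws] InbF_sem[OF tV m0, of r] CovF_sem[of \<tau> H m r] tV t0 m0
    unfolding B_def m_def by auto
  have "sat H \<sigma> (iso_formula F ws r) \<longleftrightarrow>
     (\<exists>\<tau>. (\<forall>y. y \<notin> set [1..<m] \<longrightarrow> \<tau> y = \<sigma> y) \<and> (\<forall>y \<in> set [1..<m]. \<tau> y \<in> verts H) \<and>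
        sat H \<tau> (FAnd (DistF m) (FAnd (AdjF F ws) (FAnd (InbF m r) (CovF m r)))))"
    unfolding iso_formula_def m_def exs_sem ..
  also have "\<dots> \<longleftrightarrow> rooted_iso (induced H B) (\<sigma> 0) F (ws!0)"
  proof
    assume "\<exists>\<tau>. (\<forall>y. y \<notin> set [1..<m] \<longrightarrow> \<tau> y = \<sigma> y) \<and> (\<forall>y \<in> set [1..<m]. \<tau> y \<in> verts H) \<and>
        sat H \<tau> (FAnd (DistF m) (FAnd (AdjF F ws) (FAnd (InbF m r) (CovF m r))))"
    then obtain \<tau> where t1: "\<forall>y. y \<notin> set [1..<m] \<longrightarrow> \<tau> y = \<sigma> y" and t2: "\<forall>y \<in> set [1..<m]. \<tau> y \<in> verts H"
      and t3: "sat H \<tau> (FAnd (DistF m) (FAnd (AdjF F ws) (FAnd (InbF m r) (CovF m r))))" by blast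
    have t0: "\<tau> 0 = \<sigma> 0" using t1 by simp
    have tV: "\<forall>j<m. \<tau> j \<in> verts H"
    proof (intro allI impI)
      fix j assume "j < m"
      then show "\<tau> j \<in> verts H" using t2 t0 x by (cases "j = 0") auto
    qed
    have P: "(\<forall>j<m. \<forall>k<m. j \<noteq> k \<longrightarrow> \<tau> j \<noteq> \<tau> k) \<and>
      (\<forall>j<m. \<forall>k<m. adj H (\<tau> j) (\<tau> k) \<longleftrightarrow> adj F (ws!j) (ws!k)) \<and>
      (\<forall>j<m. \<tau> j \<in> B) \<and>
      (\<forall>u \<in> verts H. u \<in> B \<longrightarrow> (\<exists>j<m. u = \<tau> j))" using iffD1[OF body[OF tV t0] t3] .
    have P2: "\<forall>j<m. \<forall>k<m. adj H (\<tau> j) (\<tau> k) \<longleftrightarrow> adj F (ws!j) (ws!k)" using P by (elim conjE)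
    have P3: "\<forall>j<m. \<tau> j \<in> B" using P by (elim conjE)
    have injt: "inj_on \<tau> {..<m}"
    proof (rule inj_onI)
      fix j k assume "j \<in> {..<m}" "k \<in> {..<m}" "\<tau> j = \<tau> k"
      then show "j = k" using P by (meson lessThan_iff)
    qed
    have imgt: "\<tau> ` {..<m} = B"
    proof
      show "\<tau> ` {..<m} \<subseteq> B" using P by auto
      show "B \<subseteq> \<tau> ` {..<m}"
      proof
        fix u assume u: "u \<in> B"
        then have "u \<in> verts H" using BV by auto
        then obtain j where "j < m" "u = \<tau> j" using P u by blast
        then show "u \<in> \<tau> ` {..<m}" by auto
      qed
    qed
    have bt: "bij_betw \<tau> {..<m} B" using injt imgt by (simp add: bij_betw_def)
    define h where "h = inv_into {..<m} ((!) ws)"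
    have bh: "bij_betw h (verts F) {..<m}" unfolding h_def by (rule bij_betw_inv_into[OF e])
    have hws: "h (ws!j) = j" if "j < m" for j
      unfolding h_def using e that by (simp add: bij_betw_def inv_into_f_f)
    have wsh: "ws ! (h a) = a" if "a \<in> verts F" for a
      unfolding h_def using e that by (simp add: bij_betw_def f_inv_into_f)
    have "rooted_iso F (ws!0) (induced H B) (\<sigma> 0)"
      unfolding rooted_iso_def
    proof (intro exI[of _ "\<tau> \<circ> h"] conjI)
      show "bij_betw (\<tau> \<circ> h) (verts F) (verts (induced H B))" unfolding vB by (rule bij_betw_trans[OF bh bt])
      show "(\<tau> \<circ> h) (ws ! 0) = \<sigma> 0" using hws[OF m0] t0 by simp
      show "\<forall>a\<in>verts F. \<forall>b\<in>verts F. adj (induced H B) ((\<tau> \<circ> h) a) ((\<tau> \<circ> h) b) = adj F a b"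
      proof (intro ballI)
        fix a b assume a: "a \<in> verts F" and b: "b \<in> verts F"
        have ha: "h a < m" "h b < m" using bij_betwE[OF bh] a b by auto
        have "adj H (\<tau> (h a)) (\<tau> (h b)) \<longleftrightarrow> adj F (ws ! (h a)) (ws ! (h b))" using P2 ha by simp
        moreover have "\<tau> (h a) \<in> B" "\<tau> (h b) \<in> B" using P3 ha by simp_all
        ultimately show "adj (induced H B) ((\<tau> \<circ> h) a) ((\<tau> \<circ> h) b) = adj F a b"
          using wsh[OF a] wsh[OF b] by simp
      qed
    qed
    moreover have "ws!0 \<in> verts F" using ws(2) m0 m_def by (metis nth_mem)
    ultimately show "rooted_iso (induced H B) (\<sigma> 0) F (ws!0)" by (rule rooted_iso_sym)
  next
    assume iso: "rooted_iso (induced H B) (\<sigma> 0) F (ws!0)"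
    then obtain f where f: "bij_betw f B (verts F)" "f (\<sigma> 0) = ws!0"
      "\<forall>a\<in>B. \<forall>b\<in>B. adj F (f a) (f b) \<longleftrightarrow> adj (induced H B) a b"
      unfolding rooted_iso_def vB by blast
    define hh where "hh = inv_into B f"
    have bhh: "bij_betw hh (verts F) B" unfolding hh_def by (rule bij_betw_inv_into[OF f(1)])
    have fhh: "f (hh a) = a" if "a \<in> verts F" for a
      unfolding hh_def using f(1) that by (simp add: bij_betw_def f_inv_into_f)
    have hhf: "hh (f u) = u" if "u \<in> B" for u
      unfolding hh_def using f(1) that by (simp add: bij_betw_def inv_into_f_f)
    define \<tau> where "\<tau> y = (if y \<in> set [1..<m] then hh (ws!y) else \<sigma> y)" for y
    have tj: "\<tau> j = hh (ws!j)" if "j < m" for j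
    proof (cases "j = 0")
      case True
      then show ?thesis using hhf[OF xB] f(2) by (simp add: \<tau>_def)
    next
      case False then show ?thesis using that by (simp add: \<tau>_def)
    qed
    have wsF: "ws!j \<in> verts F" if "j < m" for j using that ws(2) m_def by auto
    have tB: "\<forall>j<m. \<tau> j \<in> B" using tj wsF bhh by (auto dest: bij_betwE)
    have tV: "\<forall>j<m. \<tau> j \<in> verts H" using tB BV by blast
    have t0: "\<tau> 0 = \<sigma> 0" by (simp add: \<tau>_def)
    have P1: "\<forall>j<m. \<forall>k<m. j \<noteq> k \<longrightarrow> \<tau> j \<noteq> \<tau> k"
    proof (intro allI impI)
      fix j k assume jk: "j < m" "k < m" "j \<noteq> k"
      then have "ws!j \<noteq> ws!k" using ws(1) m_def by (simp add: nth_eq_iff_index_eq)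
      then show "\<tau> j \<noteq> \<tau> k" using tj jk wsF fhh by metis
    qed
    have P2: "\<forall>j<m. \<forall>k<m. adj H (\<tau> j) (\<tau> k) \<longleftrightarrow> adj F (ws!j) (ws!k)"
    proof (intro allI impI)
      fix j k assume jk: "j < m" "k < m"
      have "adj F (f (\<tau> j)) (f (\<tau> k)) \<longleftrightarrow> adj (induced H B) (\<tau> j) (\<tau> k)" using f(3) tB jk by blast
      moreover have "f (\<tau> j) = ws!j" "f (\<tau> k) = ws!k" using tj fhh wsF jk by auto
      ultimately show "adj H (\<tau> j) (\<tau> k) \<longleftrightarrow> adj F (ws!j) (ws!k)" using tB jk by simp
    qed
    have P4: "\<forall>u \<in> verts H. u \<in> B \<longrightarrow> (\<exists>j<m. u = \<tau> j)"
    proof (intro ballI impI)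
      fix u assume "u \<in> B"
      then have "f u \<in> set ws" using f(1) ws(2) by (auto dest: bij_betwE)
      then obtain j where j: "j < m" "ws!j = f u" using m_def by (auto simp: in_set_conv_nth)
      then have "\<tau> j = u" using tj hhf \<open>u \<in> B\<close> by simp
      then show "\<exists>j<m. u = \<tau> j" using j by blast
    qed
    have "sat H \<tau> (FAnd (DistF m) (FAnd (AdjF F ws) (FAnd (InbF m r) (CovF m r))))"
      using body[OF tV t0] P1 P2 tB P4 by blast
    moreover have "\<forall>y. y \<notin> set [1..<m] \<longrightarrow> \<tau> y = \<sigma> y" by (simp add: \<tau>_def)
    moreover have "\<forall>y \<in> set [1..<m]. \<tau> y \<in> verts H" using tV by auto
    ultimately show "\<exists>\<tau>. (\<forall>y. y \<notin> set [1..<m] \<longrightarrow> \<tau> y = \<sigma> y) \<and> (\<forall>y \<in> set [1..<m]. \<tau> y \<in> verts H) \<and>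
        sat H \<tau> (FAnd (DistF m) (FAnd (AdjF F ws) (FAnd (InbF m r) (CovF m r))))" by blast
  qed
  finally show ?thesis unfolding B_def .
qed



lemma DistF_fv: "free_vars (DistF m) \<subseteq> {0} \<union> {0..<m}"
  using conjs_fv[of "[FNot (FEq j k). j \<leftarrow> [0..<m], k \<leftarrow> [0..<m], j \<noteq> k]"] unfolding DistF_def by auto
lemma AdjF_fv: "free_vars (AdjF F ws) \<subseteq> {0} \<union> {0..<length ws}"
proof -
  have "free_vars (adjlit F ws j k) = {j, k}" for j k by (simp add: adjlit_def)
  then show ?thesis
    using conjs_fv[of "[adjlit F ws j k. j \<leftarrow> [0..<length ws], k \<leftarrow> [0..<length ws]]"] unfolding AdjF_def by auto
qed
lemma InbF_fv: "free_vars (InbF m r) \<subseteq> {0} \<union> {0..<m}"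
proof -
  have "free_vars (dist_f (m+1) r 0 j) \<subseteq> {0, j}" for j by (rule dist_fv)
  then show ?thesis
    using conjs_fv[of "[dist_f (m+1) r 0 j. j \<leftarrow> [0..<m]]"] unfolding InbF_def by fastforce
qed
lemma CovF_fv: "free_vars (CovF m r) \<subseteq> {0} \<union> {0..<m}"
proof -
  have a: "free_vars (dist_f (m+1) r 0 m) \<subseteq> {0, m}" by (rule dist_fv)
  have b: "free_vars (disjs [FEq m j. j \<leftarrow> [0..<m]]) \<subseteq> {0} \<union> {m} \<union> {0..<m}"
    using disjs_fv[of "[FEq m j. j \<leftarrow> [0..<m]]"] by (auto split: if_splits)
  show ?thesis unfolding CovF_def using a b by auto
qed

lemma iso_formula_fv:
  assumes "ws \<noteq> []"
  shows "free_vars (iso_formula F ws r) \<subseteq> {0..<1}"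
proof -
  let ?m = "length ws"
  have "free_vars (FAnd (DistF ?m) (FAnd (AdjF F ws) (FAnd (InbF ?m r) (CovF ?m r)))) \<subseteq> {0} \<union> {0..<?m}"
    using DistF_fv[of ?m] AdjF_fv[of F ws] InbF_fv[of ?m r] CovF_fv[of ?m r] by auto
  then show ?thesis unfolding iso_formula_def exs_fv by auto
qed

lemma nbhd_one: "nbhd G r 1 v = ball G r (v 0)"
  unfolding nbhd_def by (simp add: lessThan_Suc)

lemma iso_formula_local:
  assumes ws: "distinct ws" "set ws = verts F" "ws \<noteq> []"
  shows "r_local 1 r (iso_formula F ws r)"
  unfolding r_local_def
proof (intro allI impI)
  fix G :: graph and v :: "nat \<Rightarrow> nat" assume G: "is_graph G" and v: "v \<in> {0..<1} \<rightarrow>\<^sub>E verts G"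
  have x: "v 0 \<in> verts G" by (rule PiE_mem[OF v]) simp
  let ?H = "induced G (ball G r (v 0))"
  have xH: "v 0 \<in> verts ?H" using x center_in_ball[OF x] by simp
  have "sat G v (iso_formula F ws r) \<longleftrightarrow> rooted_iso ?H (v 0) F (ws!0)"
    using iso_formula_sem[of ws F v G r, OF ws x] .
  also have "\<dots> \<longleftrightarrow> rooted_iso (induced ?H (ball ?H r (v 0))) (v 0) F (ws!0)"
    unfolding induced_induced_ball ..
  also have "\<dots> \<longleftrightarrow> sat ?H v (iso_formula F ws r)"
    using iso_formula_sem[of ws F v ?H r, OF ws xH] by simp
  finally show "sat G v (iso_formula F ws r) \<longleftrightarrow> sat (induced G (nbhd G r 1 v)) v (iso_formula F ws r)"
    unfolding nbhd_one .
qed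

lemma density_one:
  fixes \<psi> :: fo and G :: graph
  assumes P: "\<And>v :: nat \<Rightarrow> nat. v \<in> {0..<1} \<rightarrow>\<^sub>E verts G \<Longrightarrow> sat G v \<psi> \<longleftrightarrow> Q (v 0)"
  shows "density 1 \<psi> G = real (card {x \<in> verts G. Q x}) / real (card (verts G))"
proof -
  have "bij_betw (\<lambda>v. v 0) {v \<in> {0..<1} \<rightarrow>\<^sub>E verts G. sat G v \<psi>} {x \<in> verts G. Q x}"
  proof (rule bij_betw_imageI)
    show "inj_on (\<lambda>v. v 0) {v \<in> {0..<1} \<rightarrow>\<^sub>E verts G. sat G v \<psi>}"
    proof (rule inj_onI)
      fix v w assume v: "v \<in> {v \<in> {0..<1} \<rightarrow>\<^sub>E verts G. sat G v \<psi>}" and w: "w \<in> {v \<in> {0..<1} \<rightarrow>\<^sub>E verts G. sat G v \<psi>}"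
        and e: "v 0 = w 0"
      show "v = w"
      proof
        fix i show "v i = w i"
        proof (cases "i = 0")
          case True then show ?thesis using e by simp
        next
          case False
          have "v i = undefined" by (rule PiE_arb[of v "{0..<1}" "\<lambda>_. verts G"]) (use v False in auto)
          moreover have "w i = undefined" by (rule PiE_arb[of w "{0..<1}" "\<lambda>_. verts G"]) (use w False in auto)
          ultimately show ?thesis by simp
        qed
      qed
    qed
    show "(\<lambda>v. v 0) ` {v \<in> {0..<1} \<rightarrow>\<^sub>E verts G. sat G v \<psi>} = {x \<in> verts G. Q x}"
    proof
      show "(\<lambda>v. v 0) ` {v \<in> {0..<1} \<rightarrow>\<^sub>E verts G. sat G v \<psi>} \<subseteq> {x \<in> verts G. Q x}"
        using P by auto
      show "{x \<in> verts G. Q x} \<subseteq> (\<lambda>v. v 0) ` {v \<in> {0..<1} \<rightarrow>\<^sub>E verts G. sat G v \<psi>}"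
      proof
        fix x assume x: "x \<in> {x \<in> verts G. Q x}"
        let ?v = "restrict (\<lambda>_. x) {0..<1}"
        have v: "?v \<in> {0..<1} \<rightarrow>\<^sub>E verts G" using x by auto
        then have "sat G ?v \<psi>" using P x by simp
        then show "x \<in> (\<lambda>v. v 0) ` {v \<in> {0..<1} \<rightarrow>\<^sub>E verts G. sat G v \<psi>}"
          using v by (intro image_eqI[of _ _ ?v]) auto
      qed
    qed
  qed
  then have "card {v \<in> {0..<1} \<rightarrow>\<^sub>E verts G. sat G v \<psi>} = card {x \<in> verts G. Q x}"
    by (rule bij_betw_same_card)
  then show ?thesis unfolding density_def by simp
qed

lemma FO1_imp_BS:
  assumes gr: "\<And>n. is_graph (Gs n)" and C: "FO_local1_convergent Gs"
  shows "BS_convergent d Gs"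
  unfolding BS_convergent_def
proof (intro allI impI)
  fix r F o' assume "is_graph F \<and> o' \<in> verts F \<and> connected_graph F \<and> max_degree_le d F"
  then have F: "is_graph F" and o: "o' \<in> verts F" by auto
  have finF: "finite (verts F)" using F unfolding is_graph_def by blast
  define ws where "ws = o' # sorted_list_of_set (verts F - {o'})"
  have ws: "distinct ws" "set ws = verts F" "ws \<noteq> []"
    unfolding ws_def using finF o by auto
  have w0: "ws ! 0 = o'" unfolding ws_def by simp
  let ?\<psi> = "iso_formula F ws r"
  have "?\<psi> \<in> FO_local_p 1"
    unfolding FO_local_p_def using iso_formula_fv[OF ws(3)] iso_formula_local[OF ws] by blast
  then have conv: "convergent (\<lambda>n. density 1 ?\<psi> (Gs n))" using C unfolding FO_local1_convergent_def by blast
  have "density 1 ?\<psi> (Gs n) = real (card {v \<in> verts (Gs n). rooted_iso (induced (Gs n) (ball (Gs n) r v)) v F o'})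
        / real (card (verts (Gs n)))" for n
  proof (rule density_one)
    fix v :: "nat \<Rightarrow> nat" assume v: "v \<in> {0..<1} \<rightarrow>\<^sub>E verts (Gs n)"
    have "v 0 \<in> verts (Gs n)" by (rule PiE_mem[OF v]) simp
    then show "sat (Gs n) v ?\<psi> \<longleftrightarrow> rooted_iso (induced (Gs n) (ball (Gs n) r (v 0))) (v 0) F o'"
      using iso_formula_sem[of ws F v "Gs n" r, OF ws \<open>v 0 \<in> verts (Gs n)\<close>] w0 by simp
  qed
  then show "convergent (\<lambda>n. real (card {v \<in> verts (Gs n). rooted_iso (induced (Gs n) (ball (Gs n) r v)) v F o'})
        / real (card (verts (Gs n))))" using conv by simp
qed


theorem theorem4p5:
  fixes d :: nat and Gs :: "nat \<Rightarrow> graph"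
  assumes "\<And>n. is_graph (Gs n)"
    and "\<And>n. max_degree_le d (Gs n)"
    and "filterlim (\<lambda>n. card (verts (Gs n))) at_top sequentially"
  shows "(BS_convergent d Gs \<longleftrightarrow> FO_local1_convergent Gs)
       \<and> (FO_local1_convergent Gs \<longleftrightarrow> FO_local_convergent Gs)"
proof -
  have BS_FO: "FO_local_convergent Gs" if "BS_convergent d Gs"
    unfolding FO_local_convergent_def
    using density_conv[OF assms(1) assms(2) assms(3) that] by blast
  have FO_FO1: "FO_local1_convergent Gs" if "FO_local_convergent Gs"
    using that unfolding FO_local_convergent_def FO_local1_convergent_def by blast
  have FO1_BS: "BS_convergent d Gs" if "FO_local1_convergent Gs"
    using FO1_imp_BS[OF assms(1) that] .
  show ?thesis using BS_FO FO_FO1 FO1_BS by blast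
qed

end
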